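(* Let $\Omega\subseteq\mathbb{R}^d$ be compact and convex with non-empty interior, and let $p_0,p_1$ be Lebesgue densities supported on $\Omega$ that are continuous on $\Omega$ with $0<\underline{\mathfrak p}\le p_j\le\overline{\mathfrak p}$ on $\Omega$. Let $$\omega(\eta)=\sup_{z,z'\in\Omega,\|z-z'\|\le\eta}\max_{j=0,1}\Big|\frac{p_j(z)}{p_j(z')}-1\Big|$$ and suppose $\omega(\eta)\le L\eta$ for all $\eta>0$, for some $L\ge0$. Let $v$ be the velocity field ($v(t,z)$ given by the formula below for $t\in(0,1)$, $z\in\Omega^\circ$, and $v(0,z)=\mathbb{E}[X_1]-z$, $v(1,z)=z-\mathbb{E}[X_0]$). Then for every $\varepsilon>0$, all $t\in[0,1]$ and $h>0$ with $t+h\in[0,1]$, $$\sup_{z\in\Omega^{-\varepsilon}}\|v(t,z)-v(t+h,z)\|\le2\,\mathrm{diam}(\Omega)\Big(8L\,\mathrm{diam}(\Omega)+\frac{\overline{\mathfrak p}^2}{\underline{\mathfrak p}^2}\frac{4^{d+1}d\,\mathrm{diam}^2(\Omega)}{\varepsilon^2\bar t}\Big)h,$$ where $\bar t=\min\{t,1-t\}$.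
   Context: $v(t,z)=\frac{\int_{S_t(z)}\delta p_0(z-t\delta)p_1(z+(1-t)\delta)d\delta}{\int_{S_t(z)}p_0(z-t\delta)p_1(z+(1-t)\delta)d\delta}$ with $S_t(z)=\{\delta: z-t\delta\in\Omega,\ z+(1-t)\delta\in\Omega\}$; $X_0\sim p_0$, $X_1\sim p_1$. $\Omega^{-\varepsilon}=\{x: \mathcal{B}(x,\varepsilon)\subseteq\Omega\}$, where $\mathcal{B}(x,\varepsilon)$ is the closed Euclidean ball. The right-hand side is interpreted as $+\infty$ when $\bar t=0$. *)

theory Defs
  imports "HOL-Analysis.Analysis"
begin

definition Sset :: "'a::euclidean_space set \<Rightarrow> real \<Rightarrow> 'a \<Rightarrow> 'a set" where
  "Sset \<Omega> t z = {\<delta>. z - t *\<^sub>R \<delta> \<in> \<Omega> \<and> z + (1 - t) *\<^sub>R \<delta> \<in> \<Omega>}"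

definition vel :: "('a::euclidean_space \<Rightarrow> real) \<Rightarrow> ('a \<Rightarrow> real) \<Rightarrow> 'a set \<Rightarrow> real \<Rightarrow> 'a \<Rightarrow> 'a" where
  "vel p0 p1 \<Omega> t z =
     (if t = 0 then integral UNIV (\<lambda>x. p1 x *\<^sub>R x) - z
      else if t = 1 then z - integral UNIV (\<lambda>x. p0 x *\<^sub>R x)
      else (1 / integral (Sset \<Omega> t z) (\<lambda>\<delta>. p0 (z - t *\<^sub>R \<delta>) * p1 (z + (1 - t) *\<^sub>R \<delta>)))
             *\<^sub>R integral (Sset \<Omega> t z) (\<lambda>\<delta>. (p0 (z - t *\<^sub>R \<delta>) * p1 (z + (1 - t) *\<^sub>R \<delta>)) *\<^sub>R \<delta>))"

definition omega :: "('a::euclidean_space \<Rightarrow> real) \<Rightarrow> ('a \<Rightarrow> real) \<Rightarrow> 'a set \<Rightarrow> real \<Rightarrow> real" where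
  "omega p0 p1 \<Omega> \<eta> = Sup {max \<bar>p0 z / p0 z' - 1\<bar> \<bar>p1 z / p1 z' - 1\<bar> | z z'.
                             z \<in> \<Omega> \<and> z' \<in> \<Omega> \<and> norm (z - z') \<le> \<eta>}"

definition inner_set :: "'a::euclidean_space set \<Rightarrow> real \<Rightarrow> 'a set" where
  "inner_set \<Omega> \<epsilon> = {x. cball x \<epsilon> \<subseteq> \<Omega>}"

end

theory Submission
  imports Defs
begin

lemma cont_int:
  fixes f :: "'a::euclidean_space \<Rightarrow> 'b::euclidean_space"
  shows "compact S \<Longrightarrow> continuous_on S f \<Longrightarrow> f integrable_on S"
  by (metis borel_integrable_compact set_borel_integral_eq_integral(1) set_integrable_def)

lemma vanish_int:
  fixes g :: "'a::euclidean_space \<Rightarrow> 'b::euclidean_space"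
  assumes "compact S" "continuous_on S g" "\<And>x. x \<notin> S \<Longrightarrow> g x = 0"
  shows "g integrable_on UNIV" "integral UNIV g = integral S g"
proof -
  have e: "g = (\<lambda>x. if x \<in> S then g x else 0)" using assms(3) by auto
  have "g integrable_on S" using cont_int assms by blast
  then show "g integrable_on UNIV" by (subst e) (simp add: integrable_restrict_UNIV)
  show "integral UNIV g = integral S g" by (subst e) (simp add: integral_restrict_UNIV)
qed

lemma meas_cball_pos: "(0::real) < e \<Longrightarrow> measure lebesgue (cball (0::'a::euclidean_space) e) > 0"
  using content_cball_pos by auto

lemma indic_int: "S \<in> lmeasurable \<Longrightarrow> (indicator S :: 'a::euclidean_space \<Rightarrow> real) integrable_on UNIV"
  using integrable_on_lebesgue lmeasurable_iff_integrable by blast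

lemma meas_scale:
  fixes S :: "'a::euclidean_space set"
  shows "measure lebesgue ((\<lambda>x. m *\<^sub>R x) ` S) = \<bar>m\<bar> ^ DIM('a) * measure lebesgue S"
  using measure_lebesgue_affine[of m 0 S] by simp

lemma diam_le:
  assumes "bounded S" "x \<in> S" "y \<in> S"
  shows "norm (x - y) \<le> diameter S"
  using diameter_bounded_bound[OF assms] by (simp add: dist_norm)

lemma S_compact:
  fixes \<Omega> :: "'a::euclidean_space set"
  assumes "compact \<Omega>"
  shows "compact (Sset \<Omega> \<tau> z)"
proof -
  have eq: "Sset \<Omega> \<tau> z = (\<lambda>d. z - \<tau> *\<^sub>R d) -` \<Omega> \<inter> (\<lambda>d. z + (1 - \<tau>) *\<^sub>R d) -` \<Omega>"
    by (auto simp: Sset_def)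
  have "closed (Sset \<Omega> \<tau> z)" unfolding eq
    using assms compact_imp_closed
    by (intro closed_Int continuous_closed_vimage) (auto intro!: continuous_intros)
  moreover have "Sset \<Omega> \<tau> z \<subseteq> cball 0 (diameter \<Omega>)"
  proof
    fix d assume "d \<in> Sset \<Omega> \<tau> z"
    then have "norm ((z + (1 - \<tau>) *\<^sub>R d) - (z - \<tau> *\<^sub>R d)) \<le> diameter \<Omega>"
      using diam_le compact_imp_bounded assms unfolding Sset_def by blast
    then show "d \<in> cball 0 (diameter \<Omega>)" by (simp add: algebra_simps)
  qed
  ultimately show ?thesis
    using bounded_cball bounded_subset compact_eq_bounded_closed by blast
qed

lemma S_norm:
  fixes \<Omega> :: "'a::euclidean_space set"
  assumes "bounded \<Omega>" "d \<in> Sset \<Omega> \<tau> z"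
  shows "norm d \<le> diameter \<Omega>"
proof -
  have "norm ((z + (1 - \<tau>) *\<^sub>R d) - (z - \<tau> *\<^sub>R d)) \<le> diameter \<Omega>"
    using diam_le assms unfolding Sset_def by blast
  then show ?thesis by (simp add: algebra_simps)
qed

lemma omega_lip:
  fixes \<Omega> :: "'a::euclidean_space set"
  assumes pl: "0 < pl"
    and b0: "\<And>x. x \<in> \<Omega> \<Longrightarrow> pl \<le> p0 x \<and> p0 x \<le> pu"
    and b1: "\<And>x. x \<in> \<Omega> \<Longrightarrow> pl \<le> p1 x \<and> p1 x \<le> pu"
    and om: "\<And>\<eta>. \<eta> > 0 \<Longrightarrow> omega p0 p1 \<Omega> \<eta> \<le> L * \<eta>"
    and a: "a \<in> \<Omega>" and b: "b \<in> \<Omega>" and L0: "0 \<le> L"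
  shows "\<bar>p0 a - p0 b\<bar> \<le> L * norm (a - b) * p0 b \<and> \<bar>p1 a - p1 b\<bar> \<le> L * norm (a - b) * p1 b"
proof (cases "a = b")
  case True
  then show ?thesis using True b b0 b1 pl L0 by auto
next
  case False
  define \<eta> where "\<eta> = norm (a - b)"
  have eta: "\<eta> > 0" using False by (simp add: \<eta>_def)
  define X where "X = {max \<bar>p0 z / p0 z' - 1\<bar> \<bar>p1 z / p1 z' - 1\<bar> | z z'.
                             z \<in> \<Omega> \<and> z' \<in> \<Omega> \<and> norm (z - z') \<le> \<eta>}"
  have mem: "max \<bar>p0 a / p0 b - 1\<bar> \<bar>p1 a / p1 b - 1\<bar> \<in> X"
    unfolding X_def using a b \<eta>_def by blast
  have bdd: "bdd_above X"
  proof (rule bdd_aboveI[where M = "pu / pl + 1"])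
    fix x assume "x \<in> X"
    then obtain u u' where u: "u \<in> \<Omega>" "u' \<in> \<Omega>" and x: "x = max \<bar>p0 u / p0 u' - 1\<bar> \<bar>p1 u / p1 u' - 1\<bar>"
      unfolding X_def by blast
    have r: "\<bar>q u / q u' - 1\<bar> \<le> pu / pl + 1" if hq: "\<And>x. x \<in> \<Omega> \<Longrightarrow> pl \<le> q x \<and> q x \<le> pu" for q :: "'a \<Rightarrow> real"
    proof -
      have "q u / q u' \<le> pu / pl"
        using hq[OF u(1)] hq[OF u(2)] pl by (intro frac_le) auto
      moreover have "q u / q u' \<ge> 0" using hq[OF u(1)] hq[OF u(2)] pl by auto
      ultimately show ?thesis by linarith
    qed
    show "x \<le> pu / pl + 1" using r[where q=p0, OF b0] r[where q=p1, OF b1] x by simp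
  qed
  have "max \<bar>p0 a / p0 b - 1\<bar> \<bar>p1 a / p1 b - 1\<bar> \<le> Sup X" using cSup_upper[OF mem bdd] .
  also have "Sup X = omega p0 p1 \<Omega> \<eta>" unfolding X_def omega_def ..
  also have "\<dots> \<le> L * \<eta>" using om eta by blast
  finally have m: "max \<bar>p0 a / p0 b - 1\<bar> \<bar>p1 a / p1 b - 1\<bar> \<le> L * \<eta>" .
  have g: "\<bar>q a - q b\<bar> \<le> L * \<eta> * q b" if hq: "\<And>x. x \<in> \<Omega> \<Longrightarrow> pl \<le> q x \<and> q x \<le> pu"
      and hm: "\<bar>q a / q b - 1\<bar> \<le> L * \<eta>" for q :: "'a \<Rightarrow> real"
  proof -
    have qb: "q b > 0" using hq[OF b] pl by linarith
    have "q a - q b = (q a / q b - 1) * q b" using qb by (simp add: field_simps)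
    then have "\<bar>q a - q b\<bar> = \<bar>q a / q b - 1\<bar> * q b" using qb by (simp add: abs_mult)
    also have "\<dots> \<le> L * \<eta> * q b" using hm qb by (intro mult_right_mono) auto
    finally show ?thesis .
  qed
  show ?thesis using g[OF b0] g[OF b1] m unfolding \<eta>_def by auto
qed

lemma seg_in:
  fixes \<Omega> :: "'a::euclidean_space set"
  assumes "convex \<Omega>" "z \<in> \<Omega>" "z + a *\<^sub>R d \<in> \<Omega>" "0 \<le> b" "b \<le> a"
  shows "z + b *\<^sub>R d \<in> \<Omega>"
proof (cases "a = 0")
  case True then show ?thesis using assms by auto
next
  case False
  define c where "c = b / a"
  have c: "0 \<le> c" "c \<le> 1" using assms False by (auto simp: c_def field_simps)
  have "(1 - c) *\<^sub>R z + c *\<^sub>R (z + a *\<^sub>R d) \<in> \<Omega>"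
    using assms(1,2,3) c by (intro convexD) auto
  moreover have "(1 - c) *\<^sub>R z + c *\<^sub>R (z + a *\<^sub>R d) = z + b *\<^sub>R d"
    using False by (simp add: c_def algebra_simps)
  ultimately show ?thesis by simp
qed

lemma scale_in_S:
  fixes \<Omega> :: "'a::euclidean_space set"
  assumes "convex \<Omega>" "z \<in> \<Omega>" "d \<in> Sset \<Omega> \<tau> z" "0 \<le> c" "c \<le> 1" "0 \<le> \<tau>" "\<tau> \<le> 1"
  shows "c *\<^sub>R d \<in> Sset \<Omega> \<tau> z"
proof -
  have 1: "z + \<tau> *\<^sub>R (- d) \<in> \<Omega>" "z + (1 - \<tau>) *\<^sub>R d \<in> \<Omega>" using assms(3) by (auto simp: Sset_def)
  have "z + (c * \<tau>) *\<^sub>R (- d) \<in> \<Omega>"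
    using seg_in[OF assms(1,2) 1(1), of "c * \<tau>"] assms by (simp add: mult_left_le_one_le)
  moreover have "z + (c * (1 - \<tau>)) *\<^sub>R d \<in> \<Omega>"
    using seg_in[OF assms(1,2) 1(2), of "c * (1 - \<tau>)"] assms by (simp add: mult_left_le_one_le)
  ultimately show ?thesis by (simp add: Sset_def algebra_simps)
qed

lemma F_facts:
  fixes \<Omega> :: "'a::euclidean_space set"
  assumes cpt: "compact \<Omega>" and v0: "\<And>x. x \<notin> \<Omega> \<Longrightarrow> p0 x = 0" and v1: "\<And>x. x \<notin> \<Omega> \<Longrightarrow> p1 x = 0"
    and c0: "continuous_on \<Omega> p0" and c1: "continuous_on \<Omega> p1"
  shows "(\<lambda>d. p0 (z - \<tau> *\<^sub>R d) * p1 (z + (1 - \<tau>) *\<^sub>R d)) integrable_on UNIV" (is ?A)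
    and "(\<lambda>d. (p0 (z - \<tau> *\<^sub>R d) * p1 (z + (1 - \<tau>) *\<^sub>R d)) *\<^sub>R d) integrable_on UNIV" (is ?B)
    and "0 < \<tau> \<Longrightarrow> \<tau> < 1 \<Longrightarrow> vel p0 p1 \<Omega> \<tau> z =
       (1 / integral UNIV (\<lambda>d. p0 (z - \<tau> *\<^sub>R d) * p1 (z + (1 - \<tau>) *\<^sub>R d)))
         *\<^sub>R integral UNIV (\<lambda>d. (p0 (z - \<tau> *\<^sub>R d) * p1 (z + (1 - \<tau>) *\<^sub>R d)) *\<^sub>R d)" (is "_ \<Longrightarrow> _ \<Longrightarrow> ?C")
proof -
  let ?S = "Sset \<Omega> \<tau> z"
  let ?F = "\<lambda>d. p0 (z - \<tau> *\<^sub>R d) * p1 (z + (1 - \<tau>) *\<^sub>R d)"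
  have Sc: "compact ?S" using S_compact cpt by blast
  have im0: "(\<lambda>d. z - \<tau> *\<^sub>R d) ` ?S \<subseteq> \<Omega>" and im1: "(\<lambda>d. z + (1 - \<tau>) *\<^sub>R d) ` ?S \<subseteq> \<Omega>"
    by (auto simp: Sset_def)
  have k0: "continuous_on ?S (\<lambda>d. p0 (z - \<tau> *\<^sub>R d))"
    by (rule continuous_on_compose2[OF c0 _ im0]) (intro continuous_intros)
  have k1: "continuous_on ?S (\<lambda>d. p1 (z + (1 - \<tau>) *\<^sub>R d))"
    by (rule continuous_on_compose2[OF c1 _ im1]) (intro continuous_intros)
  have kF: "continuous_on ?S ?F" using continuous_on_mult[OF k0 k1] .
  have kG: "continuous_on ?S (\<lambda>d. ?F d *\<^sub>R d)" using continuous_on_scaleR[OF kF continuous_on_id] .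
  have z0: "?F d = 0" if "d \<notin> ?S" for d
    using that v0 v1 by (auto simp: Sset_def)
  note A = vanish_int[OF Sc kF z0]
  have B': "(\<lambda>d. ?F d *\<^sub>R d) integrable_on UNIV" "integral UNIV (\<lambda>d. ?F d *\<^sub>R d) = integral ?S (\<lambda>d. ?F d *\<^sub>R d)"
    using vanish_int[OF Sc kG] z0 by auto
  show ?A using A by blast
  show ?B using B' by blast
  show ?C if "0 < \<tau>" "\<tau> < 1"
    using that A(2) B'(2) by (simp add: vel_def)
qed

lemma interior_arith:
  fixes P0 Q0 P1 Q1 e :: real
  assumes "0 \<le> P0" "0 \<le> Q0" "0 \<le> P1" "0 \<le> Q1" "\<bar>P0 - Q0\<bar> \<le> e * Q0" "\<bar>P1 - Q1\<bar> \<le> e * Q1"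
    "e \<le> 1" "0 \<le> e"
  shows "\<bar>Q0 * Q1 - P0 * P1\<bar> \<le> 3 * e * (Q0 * Q1)"
proof -
  have eq: "Q0 * Q1 - P0 * P1 = P0 * (Q1 - P1) + (Q0 - P0) * Q1" by algebra
  have P0le: "P0 \<le> 2 * Q0" using assms by (smt (verit) mult_left_le_one_le)
  have "\<bar>P0 * (Q1 - P1)\<bar> = P0 * \<bar>P1 - Q1\<bar>" using assms by (simp add: abs_mult abs_minus_commute)
  also have "\<dots> \<le> (2 * Q0) * (e * Q1)" using assms P0le by (intro mult_mono) auto
  finally have 1: "\<bar>P0 * (Q1 - P1)\<bar> \<le> 2 * e * (Q0 * Q1)" by (simp add: algebra_simps)
  have "\<bar>(Q0 - P0) * Q1\<bar> = \<bar>P0 - Q0\<bar> * Q1" using assms by (simp add: abs_mult abs_minus_commute)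
  also have "\<dots> \<le> (e * Q0) * Q1" using assms by (intro mult_right_mono) auto
  finally have 2: "\<bar>(Q0 - P0) * Q1\<bar> \<le> e * (Q0 * Q1)" by (simp add: algebra_simps)
  show ?thesis unfolding eq using 1 2 abs_triangle_ineq[of "P0 * (Q1 - P1)" "(Q0 - P0) * Q1"] by linarith
qed

lemma final_arith:
  fixes Nt Ns :: "'a::real_normed_vector"
  assumes "Zt > 0" "Zs > 0" "\<bar>Zt - Zs\<bar> \<le> IB" "norm (Nt - Ns) \<le> D * IB" "norm Ns \<le> D * Zs" "0 \<le> D"
  shows "norm ((1 / Zt) *\<^sub>R Nt - (1 / Zs) *\<^sub>R Ns) \<le> 2 * D * IB / Zt"
proof -
  have eq: "(1 / Zt) *\<^sub>R Nt - (1 / Zs) *\<^sub>R Ns = (1 / Zt) *\<^sub>R (Nt - Ns) + ((Zs - Zt) / (Zt * Zs)) *\<^sub>R Ns"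
  proof -
    have sc: "(Zs - Zt) / (Zt * Zs) = 1 / Zt - 1 / Zs" using assms(1,2) by (simp add: field_simps)
    show ?thesis unfolding sc by (simp add: scaleR_diff_left scaleR_diff_right)
  qed
  have 1: "norm ((1 / Zt) *\<^sub>R (Nt - Ns)) \<le> D * IB / Zt"
    using assms by (simp add: divide_right_mono)
  have "norm (((Zs - Zt) / (Zt * Zs)) *\<^sub>R Ns) = (\<bar>Zt - Zs\<bar> / (Zt * Zs)) * norm Ns"
    using assms(1,2) by (simp add: abs_minus_commute)
  also have "\<dots> \<le> (IB / (Zt * Zs)) * (D * Zs)"
    using assms by (intro mult_mono divide_right_mono) auto
  also have "\<dots> = D * IB / Zt" using assms(2) by (simp add: field_simps)
  finally have 2: "norm (((Zs - Zt) / (Zt * Zs)) *\<^sub>R Ns) \<le> D * IB / Zt" .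
  show ?thesis unfolding eq using norm_triangle_ineq[of "(1 / Zt) *\<^sub>R (Nt - Ns)" "((Zs - Zt) / (Zt * Zs)) *\<^sub>R Ns"] 1 2
    by simp
qed

lemma core:
  fixes \<Omega> :: "'a::euclidean_space set" and p0 p1 :: "'a \<Rightarrow> real"
  assumes cpt: "compact \<Omega>" and cvx: "convex \<Omega>"
    and v0: "\<And>x. x \<notin> \<Omega> \<Longrightarrow> p0 x = 0" and v1: "\<And>x. x \<notin> \<Omega> \<Longrightarrow> p1 x = 0"
    and c0: "continuous_on \<Omega> p0" and c1: "continuous_on \<Omega> p1"
    and pl: "0 < pl"
    and b0: "\<And>x. x \<in> \<Omega> \<Longrightarrow> pl \<le> p0 x \<and> p0 x \<le> pu"
    and b1: "\<And>x. x \<in> \<Omega> \<Longrightarrow> pl \<le> p1 x \<and> p1 x \<le> pu"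
    and L0: "0 \<le> L" and om: "\<And>\<eta>. \<eta> > 0 \<Longrightarrow> omega p0 p1 \<Omega> \<eta> \<le> L * \<eta>"
    and ep: "0 < \<epsilon>" and ball: "cball z \<epsilon> \<subseteq> \<Omega>"
    and t0: "0 < t" and ts: "t < s" and s1: "s < 1"
    and hL: "L * (s - t) * diameter \<Omega> \<le> 1"
    and hs: "s - t \<le> (1 - t) / 2"
  shows "norm (vel p0 p1 \<Omega> t z - vel p0 p1 \<Omega> s z) \<le> 2 * diameter \<Omega> *
     (3 * L * (s - t) * diameter \<Omega> + (pu^2/pl^2) * real DIM('a) * (s - t) * (1 + 2 ^ DIM('a)) / min t (1 - t))"
proof -
  define D where "D = diameter \<Omega>"
  define h where "h = s - t"
  define n where "n = DIM('a)"
  define tb where "tb = min t (1 - t)"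
  define F where "F \<tau> d = p0 (z - \<tau> *\<^sub>R d) * p1 (z + (1 - \<tau>) *\<^sub>R d)" for \<tau> d
  define S where "S \<tau> = Sset \<Omega> \<tau> z" for \<tau>
  define Z where "Z \<tau> = integral UNIV (F \<tau>)" for \<tau>
  define N where "N \<tau> = integral UNIV (\<lambda>d. F \<tau> d *\<^sub>R d)" for \<tau>
  have bnd: "bounded \<Omega>" using cpt compact_imp_bounded by blast
  have zO: "z \<in> \<Omega>" using ball ep by auto
  have D0: "0 \<le> D" unfolding D_def by (simp add: diameter_ge_0 bnd)
  have h0: "0 < h" using ts by (simp add: h_def)
  have plu: "pl \<le> pu" using b0[OF zO] by linarith
  have p0nn: "0 \<le> p0 x" for x using b0[of x] v0[of x] pl by (cases "x \<in> \<Omega>") auto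
  have p1nn: "0 \<le> p1 x" for x using b1[of x] v1[of x] pl by (cases "x \<in> \<Omega>") auto
  have p0le: "p0 x \<le> pu" for x using b0[of x] v0[of x] pl plu by (cases "x \<in> \<Omega>") auto
  have p1le: "p1 x \<le> pu" for x using b1[of x] v1[of x] pl plu by (cases "x \<in> \<Omega>") auto
  have F0: "F \<tau> d = 0" if "d \<notin> S \<tau>" for \<tau> d
    using that v0 v1 by (auto simp: F_def S_def Sset_def)
  have Feq: "F \<tau> = (\<lambda>d. p0 (z - \<tau> *\<^sub>R d) * p1 (z + (1 - \<tau>) *\<^sub>R d))" for \<tau>
    by (simp add: fun_eq_iff F_def)
  have Fnn: "0 \<le> F \<tau> d" for \<tau> d by (simp add: F_def p0nn p1nn)
  have Fle: "F \<tau> d \<le> pu^2" for \<tau> d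
    unfolding F_def power2_eq_square using p0le p1le p0nn p1nn pl plu by (intro mult_mono) auto
  have Fge: "pl^2 \<le> F \<tau> d" if "d \<in> S \<tau>" for \<tau> d
    using that b0 b1 pl p0nn p1nn unfolding F_def power2_eq_square S_def Sset_def
    by (intro mult_mono) auto
  have Snorm: "norm d \<le> D" if "d \<in> S \<tau>" for \<tau> d
    using that S_norm[OF bnd] by (simp add: S_def D_def)
  have Sc: "compact (S \<tau>)" for \<tau> using S_compact[OF cpt] by (simp add: S_def)
  have Sl: "S \<tau> \<in> lmeasurable" for \<tau> using Sc lmeasurable_compact by blast
  have Fi: "F \<tau> integrable_on UNIV" "(\<lambda>d. F \<tau> d *\<^sub>R d) integrable_on UNIV" for \<tau>
    using F_facts(1,2)[OF cpt v0 v1 c0 c1, of z \<tau>] by (simp_all add: Feq)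
  have vel_eq: "vel p0 p1 \<Omega> \<tau> z = (1 / Z \<tau>) *\<^sub>R N \<tau>" if "0 < \<tau>" "\<tau> < 1" for \<tau>
    using F_facts(3)[OF cpt v0 v1 c0 c1 that] by (simp add: Feq Z_def N_def)
  have ballS: "cball 0 \<epsilon> \<subseteq> S \<tau>" if "0 \<le> \<tau>" "\<tau> \<le> 1" for \<tau>
  proof
    fix d :: 'a assume "d \<in> cball 0 \<epsilon>"
    then have nd: "norm d \<le> \<epsilon>" by simp
    have "norm (\<tau> *\<^sub>R d) \<le> \<epsilon>" using that nd
      by (simp add: mult_left_le_one_le order_trans[OF _ nd])
    then have "z - \<tau> *\<^sub>R d \<in> cball z \<epsilon>" by (simp add: dist_norm)
    moreover have "norm ((1 - \<tau>) *\<^sub>R d) \<le> \<epsilon>" using that nd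
      by (simp add: mult_left_le_one_le order_trans[OF _ nd])
    then have "z + (1 - \<tau>) *\<^sub>R d \<in> cball z \<epsilon>" by (simp add: dist_norm)
    ultimately show "d \<in> S \<tau>" using ball by (auto simp: S_def Sset_def)
  qed
  have mpos: "0 < measure lebesgue (S \<tau>)" if "0 \<le> \<tau>" "\<tau> \<le> 1" for \<tau>
  proof -
    have "measure lebesgue (cball (0::'a) \<epsilon>) \<le> measure lebesgue (S \<tau>)"
      using ballS[OF that] Sl by (intro measure_mono_fmeasurable) auto
    moreover have "0 < measure lebesgue (cball (0::'a) \<epsilon>)" by (rule meas_cball_pos[OF ep])
    ultimately show ?thesis by linarith
  qed
  have Zge: "pl^2 * measure lebesgue (S \<tau>) \<le> Z \<tau>" for \<tau>
  proof -
    have ii: "(indicator (S \<tau>) :: 'a \<Rightarrow> real) integrable_on UNIV" using indic_int[OF Sl] .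
    have "pl^2 * measure lebesgue (S \<tau>) = integral UNIV (\<lambda>d. pl^2 * indicator (S \<tau>) d)"
      by (simp add: lmeasure_integral_UNIV[OF Sl])
    also have "\<dots> \<le> Z \<tau>" unfolding Z_def
    proof (rule integral_le)
      show "(\<lambda>d. pl^2 * indicator (S \<tau>) d) integrable_on UNIV"
        using integrable_cmul[OF ii, of "pl^2"] by simp
      show "F \<tau> integrable_on UNIV" by (rule Fi)
      fix d show "pl^2 * indicator (S \<tau>) d \<le> F \<tau> d"
        using Fge[of d \<tau>] Fnn[of \<tau> d] by (cases "d \<in> S \<tau>") auto
    qed
    finally show ?thesis .
  qed
  have Zpos: "0 < Z \<tau>" if "0 \<le> \<tau>" "\<tau> \<le> 1" for \<tau>
    using Zge[of \<tau>] mpos[OF that] pl by (smt (verit) mult_pos_pos zero_less_power)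
  have Nle: "norm (N \<tau>) \<le> D * Z \<tau>" for \<tau>
  proof -
    have "norm (N \<tau>) \<le> integral UNIV (\<lambda>d. D * F \<tau> d)" unfolding N_def
    proof (rule integral_norm_bound_integral)
      show "(\<lambda>d. F \<tau> d *\<^sub>R d) integrable_on UNIV" by (rule Fi)
      show "(\<lambda>d. D * F \<tau> d) integrable_on UNIV" using integrable_cmul[OF Fi(1), of D] by simp
      fix d :: 'a
      show "norm (F \<tau> d *\<^sub>R d) \<le> D * F \<tau> d"
      proof (cases "d \<in> S \<tau>")
        case True
        then show ?thesis using Snorm[OF True] Fnn[of \<tau> d]
          by (simp add: mult_left_mono mult.commute[of D])
      next
        case False then show ?thesis using F0 by simp
      qed
    qed
    then show ?thesis by (simp add: Z_def)
  qed
  define lam where "lam = t / s"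
  define mu where "mu = (1 - s) / (1 - t)"
  have s0: "0 < s" using t0 ts by linarith
  have lam0: "0 < lam" "lam \<le> 1" using t0 ts by (auto simp: lam_def)
  have mu0: "0 < mu" "mu \<le> 1" using ts s1 by (auto simp: mu_def)
  have muh: "1/2 \<le> mu" using hs s1 ts by (simp add: mu_def field_simps)
  have oml: "1 - lam = h / s" using s0 by (simp add: lam_def h_def field_simps)
  have omm: "1 - mu = h / (1 - t)" using ts s1 by (simp add: mu_def h_def field_simps)
  have sub1: "(\<lambda>x. lam *\<^sub>R x) ` S t \<subseteq> S s"
  proof clarify
    fix d assume d: "d \<in> S t"
    have a: "z - t *\<^sub>R d \<in> \<Omega>" "z + (1 - t) *\<^sub>R d \<in> \<Omega>" using d by (auto simp: S_def Sset_def)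
    have "s * lam = t" using s0 by (simp add: lam_def)
    then have 1: "z - s *\<^sub>R (lam *\<^sub>R d) \<in> \<Omega>" using a by simp
    have le: "(1 - s) * lam \<le> 1 - t"
      using s0 ts t0 by (simp add: lam_def field_simps)
    have "z + ((1 - s) * lam) *\<^sub>R d \<in> \<Omega>"
      using seg_in[OF cvx zO a(2) _ le] s1 lam0 by simp
    then show "lam *\<^sub>R d \<in> S s" using 1 by (simp add: S_def Sset_def)
  qed
  have sub1': "(\<lambda>x. lam *\<^sub>R x) ` S t \<subseteq> S t"
    using scale_in_S[OF cvx zO _ _ lam0(2)] lam0 t0 ts s1 by (auto simp: S_def)
  have sub2: "(\<lambda>x. mu *\<^sub>R x) ` S s \<subseteq> S t"
  proof clarify
    fix d assume d: "d \<in> S s"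
    have a: "z + s *\<^sub>R (- d) \<in> \<Omega>" "z + (1 - s) *\<^sub>R d \<in> \<Omega>" using d by (auto simp: S_def Sset_def)
    have "(1 - t) * mu = 1 - s" using ts s1 by (simp add: mu_def)
    then have 1: "z + (1 - t) *\<^sub>R (mu *\<^sub>R d) \<in> \<Omega>" using a by simp
    have le: "t * mu \<le> s"
      using s1 ts t0 by (simp add: mu_def field_simps)
    have "z + (t * mu) *\<^sub>R (- d) \<in> \<Omega>"
      using seg_in[OF cvx zO a(1) _ le] t0 mu0 by simp
    then show "mu *\<^sub>R d \<in> S t" using 1 by (simp add: S_def Sset_def)
  qed
  have sub2': "(\<lambda>x. mu *\<^sub>R x) ` S s \<subseteq> S s"
    using scale_in_S[OF cvx zO _ _ mu0(2)] mu0 t0 ts s1 by (auto simp: S_def)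
  define A1 where "A1 = S t - (\<lambda>x. lam *\<^sub>R x) ` S t"
  define A2 where "A2 = S s - (\<lambda>x. mu *\<^sub>R x) ` S s"
  have scl: "(\<lambda>x. c *\<^sub>R x) ` S \<tau> \<in> lmeasurable" for c \<tau>
    using compact_scaling[OF Sc] lmeasurable_compact by blast
  have A1l: "A1 \<in> lmeasurable" and A2l: "A2 \<in> lmeasurable"
    unfolding A1_def A2_def using Sl scl by (auto intro: fmeasurable_Diff)
  have mA1: "measure lebesgue A1 = measure lebesgue (S t) - lam ^ n * measure lebesgue (S t)"
    unfolding A1_def using measurable_measure_Diff[OF Sl[of t] _ sub1'] scl meas_scale[of lam "S t"] lam0
    by (simp add: n_def)
  have mA2: "measure lebesgue A2 = measure lebesgue (S s) - mu ^ n * measure lebesgue (S s)"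
    unfolding A2_def using measurable_measure_Diff[OF Sl[of s] _ sub2'] scl meas_scale[of mu "S s"] mu0
    by (simp add: n_def)
  have mS: "mu ^ n * measure lebesgue (S s) \<le> measure lebesgue (S t)"
    using measure_mono_fmeasurable[OF sub2 _ Sl[of t]] scl meas_scale[of mu "S s"] mu0
    by (simp add: n_def)
  have bern: "1 - x ^ n \<le> real n * (1 - x)" if "0 \<le> x" for x :: real
    using Bernoulli_inequality[of "x - 1" n] that by (simp add: algebra_simps)
  have ms2: "measure lebesgue (S s) \<le> 2 ^ n * measure lebesgue (S t)"
  proof -
    have "(1/2) ^ n \<le> mu ^ n" using muh by (intro power_mono) auto
    then have "(1/2) ^ n * measure lebesgue (S s) \<le> mu ^ n * measure lebesgue (S s)"
      by (intro mult_right_mono) auto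
    then have "(1/2) ^ n * measure lebesgue (S s) \<le> measure lebesgue (S t)" using mS by linarith
    then have "2 ^ n * ((1/2) ^ n * measure lebesgue (S s)) \<le> 2 ^ n * measure lebesgue (S t)"
      by (intro mult_left_mono) auto
    then show ?thesis by (simp add: power_one_over)
  qed
  define e where "e = L * h * D"
  have e0: "0 \<le> e" "e \<le> 1" using L0 h0 D0 hL by (auto simp: e_def h_def D_def)
  define B where "B d = 3 * e * F t d + pu^2 * indicator A1 d + pu^2 * indicator A2 d" for d
  have i1: "(indicator A1 :: 'a \<Rightarrow> real) integrable_on UNIV" using indic_int[OF A1l] .
  have i2: "(indicator A2 :: 'a \<Rightarrow> real) integrable_on UNIV" using indic_int[OF A2l] .
  have Bi: "B integrable_on UNIV"
  proof -
    have "(\<lambda>d. 3 * e * F t d + pu^2 * indicator A1 d + pu^2 * indicator A2 d) integrable_on UNIV"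
      using integrable_cmul[OF Fi(1), of "3 * e" t] integrable_cmul[OF i1, of "pu^2"] integrable_cmul[OF i2, of "pu^2"]
      by (intro integrable_add) auto
    then show ?thesis by (simp add: B_def[abs_def])
  qed
  have IB: "integral UNIV B = 3 * e * Z t + pu^2 * measure lebesgue A1 + pu^2 * measure lebesgue A2"
  proof -
    have "integral UNIV B = integral UNIV (\<lambda>d. 3 * e * F t d + pu^2 * indicator A1 d) + integral UNIV (\<lambda>d. pu^2 * indicator A2 d)"
      unfolding B_def
      using integrable_cmul[OF Fi(1), of "3 * e" t] integrable_cmul[OF i1, of "pu^2"] integrable_cmul[OF i2, of "pu^2"]
      by (subst integral_add) (auto intro!: integrable_add)
    also have "integral UNIV (\<lambda>d. 3 * e * F t d + pu^2 * indicator A1 d) = 3 * e * Z t + pu^2 * measure lebesgue A1"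
      using integrable_cmul[OF Fi(1), of "3 * e" t] integrable_cmul[OF i1, of "pu^2"]
      by (subst integral_add) (auto simp: Z_def lmeasure_integral_UNIV[OF A1l])
    also have "integral UNIV (\<lambda>d. pu^2 * indicator A2 d) = pu^2 * measure lebesgue A2"
      by (simp add: lmeasure_integral_UNIV[OF A2l])
    finally show ?thesis .
  qed
  have Bnn: "0 \<le> B d" for d using e0 Fnn[of t d] by (simp add: B_def)
  have pw: "\<bar>F t d - F s d\<bar> \<le> B d" for d
  proof -
    have Bge1: "3 * e * F t d \<le> B d" by (simp add: B_def)
    have Bge2: "d \<in> A1 \<Longrightarrow> pu^2 \<le> B d" using e0 Fnn[of t d] by (simp add: B_def)
    have Bge3: "d \<in> A2 \<Longrightarrow> pu^2 \<le> B d" using e0 Fnn[of t d] by (simp add: B_def)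
    consider "d \<in> S t" "d \<in> S s" | "d \<in> S t" "d \<notin> S s" | "d \<notin> S t" "d \<in> S s" | "d \<notin> S t" "d \<notin> S s"
      by blast
    then show ?thesis
    proof cases
      case 1
      have a0: "z - s *\<^sub>R d \<in> \<Omega>" "z + (1 - s) *\<^sub>R d \<in> \<Omega>" using 1 by (auto simp: S_def Sset_def)
      have b0': "z - t *\<^sub>R d \<in> \<Omega>" "z + (1 - t) *\<^sub>R d \<in> \<Omega>" using 1 by (auto simp: S_def Sset_def)
      have nd: "norm d \<le> D" using Snorm 1 by blast
      have n0: "norm ((z - s *\<^sub>R d) - (z - t *\<^sub>R d)) = h * norm d"
        using h0 by (simp add: h_def algebra_simps flip: scaleR_diff_left)
      have n1: "norm ((z + (1 - s) *\<^sub>R d) - (z + (1 - t) *\<^sub>R d)) = h * norm d"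
        using h0 by (simp add: h_def algebra_simps flip: scaleR_diff_left)
      have hn: "L * (h * norm d) \<le> e"
      proof -
        have "L * h * norm d \<le> L * h * D" using L0 h0 nd by (intro mult_left_mono) auto
        then show ?thesis by (simp add: e_def mult.assoc)
      qed
      have l0: "\<bar>p0 (z - s *\<^sub>R d) - p0 (z - t *\<^sub>R d)\<bar> \<le> e * p0 (z - t *\<^sub>R d)"
      proof -
        have "\<bar>p0 (z - s *\<^sub>R d) - p0 (z - t *\<^sub>R d)\<bar> \<le> L * (h * norm d) * p0 (z - t *\<^sub>R d)"
          using omega_lip[OF pl b0 b1 om a0(1) b0'(1) L0] n0 by simp
        also have "\<dots> \<le> e * p0 (z - t *\<^sub>R d)" using hn p0nn by (intro mult_right_mono) auto
        finally show ?thesis .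
      qed
      have l1: "\<bar>p1 (z + (1 - s) *\<^sub>R d) - p1 (z + (1 - t) *\<^sub>R d)\<bar> \<le> e * p1 (z + (1 - t) *\<^sub>R d)"
      proof -
        have "\<bar>p1 (z + (1 - s) *\<^sub>R d) - p1 (z + (1 - t) *\<^sub>R d)\<bar> \<le> L * (h * norm d) * p1 (z + (1 - t) *\<^sub>R d)"
          using omega_lip[OF pl b0 b1 om a0(2) b0'(2) L0] n1 by simp
        also have "\<dots> \<le> e * p1 (z + (1 - t) *\<^sub>R d)" using hn p1nn by (intro mult_right_mono) auto
        finally show ?thesis .
      qed
      have "\<bar>F t d - F s d\<bar> \<le> 3 * e * F t d"
        unfolding F_def using interior_arith[OF p0nn p0nn p1nn p1nn l0 l1 e0(2) e0(1)] by simp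
      then show ?thesis using Bge1 by linarith
    next
      case 2
      have "F s d = 0" using F0 2 by blast
      moreover have "d \<in> A1" using 2 sub1 by (auto simp: A1_def)
      ultimately show ?thesis using Bge3 Bge2 Fle[of t d] Fnn[of t d] by simp
    next
      case 3
      have "F t d = 0" using F0 3 by blast
      moreover have "d \<in> A2" using 3 sub2 by (auto simp: A2_def)
      ultimately show ?thesis using Bge3 Fle[of s d] Fnn[of s d] by simp
    qed (use F0 Bnn in simp)
  qed
  have pwn: "norm (F t d *\<^sub>R d - F s d *\<^sub>R d) \<le> D * B d" for d
  proof (cases "d \<in> S t \<or> d \<in> S s")
    case True
    then have nd: "norm d \<le> D" using Snorm by blast
    have "norm (F t d *\<^sub>R d - F s d *\<^sub>R d) = \<bar>F t d - F s d\<bar> * norm d"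
      by (simp flip: scaleR_diff_left)
    also have "\<dots> \<le> B d * D" using pw[of d] nd Bnn[of d] by (intro mult_mono) auto
    finally show ?thesis by (simp add: mult.commute)
  next
    case False then show ?thesis using F0 Bnn D0 by simp
  qed
  have dZ: "\<bar>Z t - Z s\<bar> \<le> integral UNIV B"
  proof -
    have "Z t - Z s = integral UNIV (\<lambda>d. F t d - F s d)"
      unfolding Z_def using Fi(1)[of t] Fi(1)[of s] by (simp add: integral_diff)
    also have "\<bar>\<dots>\<bar> \<le> integral UNIV B"
      using integral_norm_bound_integral[OF integrable_diff[OF Fi(1)[of t] Fi(1)[of s]] Bi] pw by simp
    finally show ?thesis .
  qed
  have dN: "norm (N t - N s) \<le> D * integral UNIV B"
  proof -
    have "N t - N s = integral UNIV (\<lambda>d. F t d *\<^sub>R d - F s d *\<^sub>R d)"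
      unfolding N_def using Fi(2)[of t] Fi(2)[of s] by (simp add: integral_diff)
    also have "norm \<dots> \<le> integral UNIV (\<lambda>d. D * B d)"
    proof (rule integral_norm_bound_integral[OF integrable_diff[OF Fi(2)[of t] Fi(2)[of s]]])
      show "(\<lambda>d. D * B d) integrable_on UNIV" using integrable_cmul[OF Bi, of D] by simp
    qed (rule pwn)
    finally show ?thesis by simp
  qed
  have Zt: "0 < Z t" and Zs: "0 < Z s" using Zpos t0 ts s1 by auto
  have main: "norm (vel p0 p1 \<Omega> t z - vel p0 p1 \<Omega> s z) \<le> 2 * D * integral UNIV B / Z t"
    using final_arith[OF Zt Zs dZ dN Nle[of s] D0] vel_eq[of t] vel_eq[of s] t0 ts s1 by simp
  define K where "K = 3 * e + (pu^2/pl^2) * real n * h * (1 + 2 ^ n) / tb"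
  have tb0: "0 < tb" "tb \<le> t" "tb \<le> 1 - t" using t0 ts s1 by (auto simp: tb_def)
  have mt: "measure lebesgue (S t) \<le> Z t / pl^2" using Zge[of t] pl by (simp add: field_simps)
  have r1: "pu^2 * measure lebesgue A1 \<le> pu^2 * (real n * (h / tb) * measure lebesgue (S t))"
  proof -
    have "measure lebesgue A1 = (1 - lam ^ n) * measure lebesgue (S t)" using mA1 by (simp add: algebra_simps)
    also have "\<dots> \<le> (real n * (h / tb)) * measure lebesgue (S t)"
    proof (rule mult_right_mono)
      have "h / s \<le> h / tb" using h0 tb0 ts by (intro divide_left_mono) auto
      then show "1 - lam ^ n \<le> real n * (h / tb)" using bern[of lam] lam0 oml
        by (smt (verit) mult_left_mono of_nat_0_le_iff)
    qed simp
    finally show ?thesis by (intro mult_left_mono) auto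
  qed
  have r2: "pu^2 * measure lebesgue A2 \<le> pu^2 * (real n * (h / tb) * (2 ^ n * measure lebesgue (S t)))"
  proof -
    have "measure lebesgue A2 = (1 - mu ^ n) * measure lebesgue (S s)" using mA2 by (simp add: algebra_simps)
    also have "\<dots> \<le> (real n * (h / tb)) * (2 ^ n * measure lebesgue (S t))"
    proof (rule mult_mono)
      have "h / (1 - t) \<le> h / tb" using h0 tb0 ts by (intro divide_left_mono) auto
      then show "1 - mu ^ n \<le> real n * (h / tb)" using bern[of mu] mu0 omm
        by (smt (verit) mult_left_mono of_nat_0_le_iff)
      show "measure lebesgue (S s) \<le> 2 ^ n * measure lebesgue (S t)" by (rule ms2)
      show "0 \<le> real n * (h / tb)" using h0 tb0 by simp
      show "0 \<le> measure lebesgue (S s)" by simp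
    qed
    finally show ?thesis by (intro mult_left_mono) auto
  qed
  have IBle: "integral UNIV B \<le> K * Z t"
  proof -
    have "integral UNIV B \<le> 3 * e * Z t + pu^2 * (real n * (h / tb) * (1 + 2 ^ n)) * measure lebesgue (S t)"
      using IB r1 r2 by (simp add: algebra_simps)
    also have "\<dots> \<le> 3 * e * Z t + pu^2 * (real n * (h / tb) * (1 + 2 ^ n)) * (Z t / pl^2)"
      using mt h0 tb0 by (intro add_left_mono mult_left_mono) auto
    also have "\<dots> = K * Z t" using pl by (simp add: K_def field_simps)
    finally show ?thesis .
  qed
  have "2 * D * integral UNIV B / Z t \<le> 2 * D * K"
    using IBle Zt D0 by (simp add: field_simps mult_left_mono)
  then have "norm (vel p0 p1 \<Omega> t z - vel p0 p1 \<Omega> s z) \<le> 2 * D * K" using main by linarith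
  then show ?thesis by (simp add: K_def e_def D_def h_def n_def tb_def algebra_simps)
qed

lemma vel_bound:
  fixes \<Omega> :: "'a::euclidean_space set" and p0 p1 :: "'a \<Rightarrow> real"
  assumes cpt: "compact \<Omega>"
    and v0: "\<And>x. x \<notin> \<Omega> \<Longrightarrow> p0 x = 0" and v1: "\<And>x. x \<notin> \<Omega> \<Longrightarrow> p1 x = 0"
    and c0: "continuous_on \<Omega> p0" and c1: "continuous_on \<Omega> p1"
    and int0: "(p0 has_integral 1) UNIV"
    and pl: "0 < pl"
    and b0: "\<And>x. x \<in> \<Omega> \<Longrightarrow> pl \<le> p0 x \<and> p0 x \<le> pu"
    and b1: "\<And>x. x \<in> \<Omega> \<Longrightarrow> pl \<le> p1 x \<and> p1 x \<le> pu"
    and zO: "z \<in> \<Omega>" and t0: "0 < \<tau>" and t1: "\<tau> \<le> 1"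
  shows "norm (vel p0 p1 \<Omega> \<tau> z) \<le> diameter \<Omega>"
proof -
  define D where "D = diameter \<Omega>"
  have bnd: "bounded \<Omega>" using cpt compact_imp_bounded by blast
  have D0: "0 \<le> D" unfolding D_def by (simp add: diameter_ge_0 bnd)
  have p0nn: "0 \<le> p0 x" for x using b0[of x] v0[of x] pl by (cases "x \<in> \<Omega>") auto
  have p1nn: "0 \<le> p1 x" for x using b1[of x] v1[of x] pl by (cases "x \<in> \<Omega>") auto
  show ?thesis
  proof (cases "\<tau> = 1")
    case True
    have i0: "p0 integrable_on UNIV" using int0 by blast
    have kx: "continuous_on \<Omega> (\<lambda>x. p0 x *\<^sub>R x)" using c0 by (intro continuous_intros)
    have ix: "(\<lambda>x. p0 x *\<^sub>R x) integrable_on UNIV"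
      using vanish_int(1)[OF cpt kx] v0 by simp
    have hz: "((\<lambda>x. p0 x *\<^sub>R z) has_integral (1 *\<^sub>R z)) UNIV" using has_integral_scaleR_left[OF int0] .
    have iz: "(\<lambda>x. p0 x *\<^sub>R z) integrable_on UNIV" using hz by blast
    have "integral UNIV (\<lambda>x. p0 x *\<^sub>R z) = z" using hz by (simp add: integral_unique)
    then have "vel p0 p1 \<Omega> \<tau> z = integral UNIV (\<lambda>x. p0 x *\<^sub>R z - p0 x *\<^sub>R x)"
      using True iz ix by (simp add: vel_def integral_diff)
    also have "norm \<dots> \<le> integral UNIV (\<lambda>x. D * p0 x)"
    proof (rule integral_norm_bound_integral[OF integrable_diff[OF iz ix]])
      show "(\<lambda>x. D * p0 x) integrable_on UNIV" using integrable_cmul[OF i0, of D] by simp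
      fix x :: 'a
      show "norm (p0 x *\<^sub>R z - p0 x *\<^sub>R x) \<le> D * p0 x"
      proof (cases "x \<in> \<Omega>")
        case True
        have "norm (z - x) \<le> D" using diam_le[OF bnd zO True] by (simp add: D_def)
        then show ?thesis using p0nn[of x]
          by (simp add: mult_left_mono mult.commute[of D] flip: scaleR_diff_right)
      next
        case False then show ?thesis using v0 by simp
      qed
    qed
    also have "\<dots> = D" using int0 by (simp add: integral_unique)
    finally show ?thesis by (simp add: D_def)
  next
    case False
    then have t1': "\<tau> < 1" using t1 by simp
    define F where "F d = p0 (z - \<tau> *\<^sub>R d) * p1 (z + (1 - \<tau>) *\<^sub>R d)" for d
    have Feq: "F = (\<lambda>d. p0 (z - \<tau> *\<^sub>R d) * p1 (z + (1 - \<tau>) *\<^sub>R d))" by (simp add: fun_eq_iff F_def)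
    have Fi: "F integrable_on UNIV" "(\<lambda>d. F d *\<^sub>R d) integrable_on UNIV"
      using F_facts(1,2)[OF cpt v0 v1 c0 c1, of z \<tau>] by (simp_all add: Feq)
    have ve: "vel p0 p1 \<Omega> \<tau> z = (1 / integral UNIV F) *\<^sub>R integral UNIV (\<lambda>d. F d *\<^sub>R d)"
      using F_facts(3)[OF cpt v0 v1 c0 c1 t0 t1'] by (simp add: Feq)
    have Fnn: "0 \<le> F d" for d by (simp add: F_def p0nn p1nn)
    have F0: "F d = 0" if "d \<notin> Sset \<Omega> \<tau> z" for d
      using that v0 v1 by (auto simp: F_def Sset_def)
    have Z0: "0 \<le> integral UNIV F" using Fi(1) Fnn by (simp add: integral_nonneg)
    have N: "norm (integral UNIV (\<lambda>d. F d *\<^sub>R d)) \<le> D * integral UNIV F"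
    proof -
      have "norm (integral UNIV (\<lambda>d. F d *\<^sub>R d)) \<le> integral UNIV (\<lambda>d. D * F d)"
      proof (rule integral_norm_bound_integral[OF Fi(2)])
        show "(\<lambda>d. D * F d) integrable_on UNIV" using integrable_cmul[OF Fi(1), of D] by simp
        fix d :: 'a
        show "norm (F d *\<^sub>R d) \<le> D * F d"
        proof (cases "d \<in> Sset \<Omega> \<tau> z")
          case True
          then show ?thesis using S_norm[OF bnd True] Fnn[of d]
            by (simp add: mult_left_mono mult.commute[of "diameter \<Omega>"] D_def)
        next
          case False then show ?thesis using F0 by simp
        qed
      qed
      then show ?thesis by simp
    qed
    show ?thesis
    proof (cases "integral UNIV F = 0")
      case True then show ?thesis using ve D0 by (simp add: D_def)
    next
      case False
      then have "0 < integral UNIV F" using Z0 by simp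
      then show ?thesis using ve N by (simp add: D_def field_simps)
    qed
  qed
qed

theorem proposition4:
  fixes \<Omega> :: "'a::euclidean_space set"
    and p0 p1 :: "'a \<Rightarrow> real"
    and pl pu L \<epsilon> t h :: real
  assumes "compact \<Omega>" and "convex \<Omega>" and "interior \<Omega> \<noteq> {}"
    and "\<And>x. x \<notin> \<Omega> \<Longrightarrow> p0 x = 0" and "\<And>x. x \<notin> \<Omega> \<Longrightarrow> p1 x = 0"
    and "(p0 has_integral 1) UNIV" and "(p1 has_integral 1) UNIV"
    and "continuous_on \<Omega> p0" and "continuous_on \<Omega> p1"
    and "0 < pl"
    and "\<And>x. x \<in> \<Omega> \<Longrightarrow> pl \<le> p0 x \<and> p0 x \<le> pu"
    and "\<And>x. x \<in> \<Omega> \<Longrightarrow> pl \<le> p1 x \<and> p1 x \<le> pu"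
    and "0 \<le> L" and "\<And>\<eta>. \<eta> > 0 \<Longrightarrow> omega p0 p1 \<Omega> \<eta> \<le> L * \<eta>"
    and "0 < \<epsilon>"
    and "0 \<le> t" and "t \<le> 1" and "0 < h" and "t + h \<le> 1"
  shows "\<forall>z \<in> inner_set \<Omega> \<epsilon>. min t (1 - t) > 0 \<longrightarrow>
           norm (vel p0 p1 \<Omega> t z - vel p0 p1 \<Omega> (t + h) z)
             \<le> 2 * diameter \<Omega> * (8 * L * diameter \<Omega>
                 + (pu ^ 2 / pl ^ 2) * (4 ^ (DIM('a) + 1) * real DIM('a) * diameter \<Omega> ^ 2)
                   / (\<epsilon> ^ 2 * min t (1 - t))) * h"
proof (intro ballI impI)
  note A = assms
  fix z assume zi: "z \<in> inner_set \<Omega> \<epsilon>" and tb0: "min t (1 - t) > 0"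
  define D where "D = diameter \<Omega>"
  define n where "n = DIM('a)"
  define tb where "tb = min t (1 - t)"
  define X where "X = pu ^ 2 / pl ^ 2"
  define Q where "Q = X * (4 ^ (n + 1) * real n * D ^ 2) / (\<epsilon> ^ 2 * tb)"
  have ball: "cball z \<epsilon> \<subseteq> \<Omega>" using zi by (simp add: inner_set_def)
  have zO: "z \<in> \<Omega>" using ball A(15) by auto
  have bnd: "bounded \<Omega>" using A(1) compact_imp_bounded by blast
  have t0: "0 < t" and t1: "t < 1" using tb0 by auto
  have tbp: "0 < tb" "tb \<le> t" "tb \<le> 1 - t" using tb0 by (auto simp: tb_def)
  have Dge: "\<epsilon> \<le> D"
  proof -
    obtain b :: 'a where b: "b \<in> Basis" using nonempty_Basis by blast
    have "z + \<epsilon> *\<^sub>R b \<in> cball z \<epsilon>" using b A(15) by (simp add: dist_norm)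
    then have "z + \<epsilon> *\<^sub>R b \<in> \<Omega>" using ball by blast
    then have "norm ((z + \<epsilon> *\<^sub>R b) - z) \<le> D" using diam_le[OF bnd _ zO] by (simp only: D_def)
    then show ?thesis using b A(15) by simp
  qed
  have D0: "0 \<le> D" using Dge A(15) by linarith
  have plu: "pl \<le> pu" using A(11)[OF zO] by linarith
  have X1: "1 \<le> X" unfolding X_def using plu A(10) by (simp add: power_mono)
  have n1: "1 \<le> real n" by (simp add: n_def DIM_positive Suc_leI)
  have DE: "1 \<le> D ^ 2 / \<epsilon> ^ 2" using Dge A(15) by (simp add: power_mono)
  have p4: "16 \<le> (4::real) ^ (n + 1)"
  proof -
    have "(4::real) ^ 2 \<le> 4 ^ (n + 1)" using n1 by (intro power_increasing) auto
    then show ?thesis by simp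
  qed
  have Qge: "16 / tb \<le> Q"
  proof -
    have "16 \<le> X * (4 ^ (n + 1) * real n) * (D ^ 2 / \<epsilon> ^ 2)"
    proof -
      have a: "16 * 1 \<le> (4 ^ (n + 1) * real n)" by (rule mult_mono[OF p4 n1]) auto
      have b: "16 * 1 \<le> (4 ^ (n + 1) * real n) * X" by (rule mult_mono[OF _ X1]) (use a in auto)
      have "16 * 1 \<le> (4 ^ (n + 1) * real n) * X * (D ^ 2 / \<epsilon> ^ 2)" by (rule mult_mono[OF _ DE]) (use b in auto)
      then show ?thesis by (simp add: algebra_simps)
    qed
    then have "16 / tb \<le> X * (4 ^ (n + 1) * real n) * (D ^ 2 / \<epsilon> ^ 2) / tb"
      using tbp by (intro divide_right_mono) auto
    also have "\<dots> = Q" unfolding Q_def by (simp add: field_simps)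
    finally show ?thesis .
  qed
  have Q0: "0 \<le> Q" using Qge tbp by (smt (verit) divide_pos_pos)
  have vb: "norm (vel p0 p1 \<Omega> \<tau> z) \<le> D" if "0 < \<tau>" "\<tau> \<le> 1" for \<tau>
    using vel_bound[OF A(1,4,5,8,9,6,10,11,12) zO that] by (simp add: D_def)
  have goal_eq: "2 * diameter \<Omega> * (8 * L * diameter \<Omega>
                 + (pu ^ 2 / pl ^ 2) * (4 ^ (DIM('a) + 1) * real DIM('a) * diameter \<Omega> ^ 2)
                   / (\<epsilon> ^ 2 * min t (1 - t))) * h = 2 * D * (8 * L * D + Q) * h"
    by (simp add: D_def Q_def X_def n_def tb_def)
  have fin: "norm (vel p0 p1 \<Omega> t z - vel p0 p1 \<Omega> (t + h) z) \<le> 2 * D * (8 * L * D + Q) * h"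
  proof (cases "h \<le> (1 - t) / 2 \<and> L * h * D \<le> 1")
    case False
    have big: "1 \<le> (8 * L * D + Q) * h"
    proof (cases "h \<le> (1 - t) / 2")
      case True
      then have "1 < L * h * D" using False by simp
      moreover have "Q * h \<ge> 0" using Q0 A(18) by simp
      ultimately show ?thesis by (simp add: algebra_simps)
    next
      case False
      then have "1/2 < h / (1 - t)" using t1 by (simp add: field_simps)
      also have "h / (1 - t) \<le> h / tb" using tbp A(18) by (intro divide_left_mono) auto
      finally have "1/2 < h / tb" .
      then have "8 \<le> 16 * (h / tb)" by linarith
      then have "8 \<le> 16 / tb * h" by simp
      also have "\<dots> \<le> Q * h" using Qge A(18) by (intro mult_right_mono) auto
      finally have "8 \<le> Q * h" .
      moreover have "0 \<le> 8 * L * D * h" using A(13) D0 A(18) by simp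
      ultimately show ?thesis by (simp add: algebra_simps)
    qed
    have "norm (vel p0 p1 \<Omega> t z - vel p0 p1 \<Omega> (t + h) z) \<le> norm (vel p0 p1 \<Omega> t z) + norm (vel p0 p1 \<Omega> (t + h) z)"
      by (rule norm_triangle_ineq4)
    also have "\<dots> \<le> 2 * D" using vb[of t] vb[of "t + h"] t0 t1 A(18,19) by simp
    also have "\<dots> \<le> 2 * D * ((8 * L * D + Q) * h)" using mult_left_mono[OF big, of "2 * D"] D0 by simp
    finally show ?thesis by (simp add: mult.assoc)
  next
    case True
    have s1: "t + h < 1" using True A(18) t1 by simp
    have hL: "L * (t + h - t) * diameter \<Omega> \<le> 1" using True by (simp add: D_def)
    have hs: "t + h - t \<le> (1 - t) / 2" using True by simp
    have c: "norm (vel p0 p1 \<Omega> t z - vel p0 p1 \<Omega> (t + h) z) \<le> 2 * D *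
       (3 * L * h * D + X * real n * h * (1 + 2 ^ n) / tb)"
      using core[OF A(1,2,4,5,8,9,10,11,12,13,14,15) ball t0 _ s1 hL hs] A(18)
      by (simp add: D_def X_def n_def tb_def)
    have e1: "3 * L * h * D \<le> 8 * L * D * h" using A(13,18) D0 by (simp add: mult_right_mono mult_nonneg_nonneg)
    have p2: "1 + 2 ^ n \<le> (4::real) ^ (n + 1)"
    proof -
      have "(2::real) ^ n \<le> 4 ^ n" by (intro power_mono) auto
      moreover have "(1::real) \<le> 4 ^ n" by (rule one_le_power) simp
      moreover have "(4::real) ^ (n + 1) = 4 * 4 ^ n" by simp
      ultimately show ?thesis by linarith
    qed
    have e2: "X * real n * h * (1 + 2 ^ n) / tb \<le> Q * h"
    proof -
      have k0: "(4::real) ^ (n + 1) * 1 \<le> 4 ^ (n + 1) * (D ^ 2 / \<epsilon> ^ 2)"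
        by (rule mult_left_mono[OF DE]) simp
      have k: "1 + 2 ^ n \<le> 4 ^ (n + 1) * (D ^ 2 / \<epsilon> ^ 2)" using k0 p2 by linarith
      have pos: "0 \<le> X * real n * h / tb" using X1 n1 A(18) tbp by simp
      have "X * real n * h * (1 + 2 ^ n) / tb = (X * real n * h / tb) * (1 + 2 ^ n)" by simp
      also have "\<dots> \<le> (X * real n * h / tb) * (4 ^ (n + 1) * (D ^ 2 / \<epsilon> ^ 2))"
        by (rule mult_left_mono[OF k pos])
      also have "\<dots> = Q * h" unfolding Q_def by (simp add: mult_ac)
      finally show ?thesis .
    qed
    have "2 * D * (3 * L * h * D + X * real n * h * (1 + 2 ^ n) / tb) \<le> 2 * D * (8 * L * D * h + Q * h)"
      using e1 e2 D0 by (intro mult_left_mono) auto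
    then show ?thesis using c by (simp add: algebra_simps)
  qed
  show "norm (vel p0 p1 \<Omega> t z - vel p0 p1 \<Omega> (t + h) z)
             \<le> 2 * diameter \<Omega> * (8 * L * diameter \<Omega>
                 + (pu ^ 2 / pl ^ 2) * (4 ^ (DIM('a) + 1) * real DIM('a) * diameter \<Omega> ^ 2)
                   / (\<epsilon> ^ 2 * min t (1 - t))) * h"
    unfolding goal_eq by (rule fin)
qed

end
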